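(* Let $\rho\in(-1,1)$, $\rho\ne0$, and let $(Y_n)_{n\ge1}$ be i.i.d. with $\mathbb{E}[|Y_1|^a]<\infty$ for some $a>0$. Set $Z:=\sum_{n=1}^\infty\rho^nY_n$ (an a.s. convergent series). Let $\varphi$ be the characteristic function of $Y_1$ and assume there are $\delta\in(0,|\rho|)$ and $t_0>0$ such that $|\varphi(t)|\le\delta$ for all $|t|\ge t_0$. Then $\mathbb{P}(|Z|\le\varepsilon)\precsim\varepsilon$ as $\varepsilon\downarrow0$.
   Context: $f\precsim g$ as $\varepsilon\downarrow0$ means $\limsup_{\varepsilon\downarrow0}f(\varepsilon)/g(\varepsilon)<\infty$. *)

theory Defs
  imports "HOL-Probability.Probability"
begin

end

theory Submission
  imports Defs
begin


lemma gauss_identity: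
  fixes x :: real
  shows "complex_of_real (exp (- (x^2) / 2)) = (\<integral>t. std_normal_density t *\<^sub>R iexp (x * t) \<partial>lborel)"
proof -
  have "complex_of_real (exp (- (x^2) / 2)) = char std_normal_distribution x"
    by (simp add: char_std_normal_distribution)
  also have "\<dots> = (\<integral>t. std_normal_density t *\<^sub>R iexp (x * t) \<partial>lborel)"
    unfolding char_def by (subst integral_density) auto
  finally show ?thesis .
qed

lemma (in prob_space) gauss_bound:
  fixes X :: "'a \<Rightarrow> real" and T :: real
  assumes X[measurable]: "X \<in> borel_measurable M"
  shows "(\<integral>\<omega>. exp (-((T * X \<omega>)^2)/2) \<partial>M) \<le> (\<integral>t. std_normal_density t * cmod (\<integral>\<omega>. iexp (T*t * X \<omega>) \<partial>M) \<partial>lborel)"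
proof -
  interpret ps: pair_sigma_finite M lborel
    by (simp add: pair_sigma_finite.intro lborel.sigma_finite_measure_axioms sigma_finite_measure_axioms)
  define f where "f \<omega> t = std_normal_density t *\<^sub>R iexp (T * X \<omega> * t)" for \<omega> t
  have fm[measurable]: "case_prod f \<in> borel_measurable (M \<Otimes>\<^sub>M lborel)"
    unfolding f_def by measurable
  have nf: "norm (f \<omega> t) = std_normal_density t" for \<omega> t
    unfolding f_def by (simp add: norm_exp_i_times del: of_real_mult)
  have int2: "integrable lborel (f \<omega>)" for \<omega>
    proof (rule Bochner_Integration.integrable_bound[OF integrable_normal_density[of 1 0]])
    show "f \<omega> \<in> borel_measurable lborel" unfolding f_def by measurable
  qed (auto simp: nf)
  have intp: "integrable (M \<Otimes>\<^sub>M lborel) (case_prod f)"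
    by (rule ps.Fubini_integrable) (auto simp: nf int2)
  have "complex_of_real (\<integral>\<omega>. exp (-((T * X \<omega>)^2)/2) \<partial>M) = (\<integral>\<omega>. complex_of_real (exp (-((T * X \<omega>)^2)/2)) \<partial>M)"
    by simp
  also have "\<dots> = (\<integral>\<omega>. (\<integral>t. f \<omega> t \<partial>lborel) \<partial>M)"
    unfolding f_def by (subst gauss_identity) simp
  also have "\<dots> = (\<integral>t. (\<integral>\<omega>. f \<omega> t \<partial>M) \<partial>lborel)"
    using ps.Fubini_integral[OF intp] by simp
  also have "\<dots> = (\<integral>t. std_normal_density t *\<^sub>R (\<integral>\<omega>. iexp (T*t * X \<omega>) \<partial>M) \<partial>lborel)"
    unfolding f_def by (simp add: mult_ac)
  finally have eq: "complex_of_real (\<integral>\<omega>. exp (-((T * X \<omega>)^2)/2) \<partial>M) = \<dots>" .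
  have "(\<integral>\<omega>. exp (-((T * X \<omega>)^2)/2) \<partial>M) = norm (complex_of_real (\<integral>\<omega>. exp (-((T * X \<omega>)^2)/2) \<partial>M))"
    by (simp add: integral_nonneg_AE)
  also have "\<dots> \<le> (\<integral>t. norm (std_normal_density t *\<^sub>R (\<integral>\<omega>. iexp (T*t * X \<omega>) \<partial>M)) \<partial>lborel)"
    unfolding eq by (rule integral_norm_bound)
  also have "\<dots> = (\<integral>t. std_normal_density t * cmod (\<integral>\<omega>. iexp (T*t * X \<omega>) \<partial>M) \<partial>lborel)"
    by simp
  finally show ?thesis .
qed



lemma integrable_tail_powr:
  fixes t0 p :: real assumes t0: "t0 > 0" and p: "p > 1"
  shows "integrable lborel (\<lambda>s. indicator {t0..} s * s powr (-p))"
proof -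
  have hi: "((\<lambda>x. x powr (-p)) has_integral -(t0 powr (-p+1)) / (-p+1)) {t0..}"
    by (rule has_integral_powr_to_inf) (use p t0 in auto)
  have "integral\<^sup>N lborel (\<lambda>x. indicator {t0..} x * x powr (-p)) = -(t0 powr (-p+1)) / (-p+1)"
    by (rule nn_integral_has_integral_lebesgue[OF _ hi]) auto
  then show ?thesis
    by (intro integrableI_nonneg) (auto simp: indicator_def)
qed

lemma integrable_B:
  fixes t0 p K :: real assumes t0: "t0 > 0" and p: "p > 1"
  shows "integrable lborel (\<lambda>s. if \<bar>s\<bar> \<le> t0 then 1 else K * \<bar>s\<bar> powr (-p))"
proof -
  let ?h = "\<lambda>s. indicator {t0..} s * s powr (-p)"
  have h1: "integrable lborel ?h" by (rule integrable_tail_powr[OF t0 p])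
  have h2: "integrable lborel (\<lambda>s. ?h (0 + (-1) * s))"
    by (rule lborel_integrable_real_affine[OF h1]) simp
  have h3: "integrable lborel (indicator {-t0..t0} :: real \<Rightarrow> real)"
    by (rule integrable_real_indicator) (use t0 in auto)
  have hs: "integrable lborel (\<lambda>s. indicator {-t0..t0} s + \<bar>K\<bar> * ?h s + \<bar>K\<bar> * ?h (0 + (-1) * s))"
    using h1 h2 h3 by auto
  show ?thesis
  proof (rule Bochner_Integration.integrable_bound[OF hs])
    show "(\<lambda>s. if \<bar>s\<bar> \<le> t0 then 1 else K * \<bar>s\<bar> powr (-p)) \<in> borel_measurable lborel"
      by measurable
    show "AE x in lborel. norm (if \<bar>x\<bar> \<le> t0 then 1 else K * \<bar>x\<bar> powr (-p))
       \<le> norm (indicator {-t0..t0} x + \<bar>K\<bar> * ?h x + \<bar>K\<bar> * ?h (0 + (-1) * x))"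
    proof (intro AE_I2)
      fix x :: real
      show "norm (if \<bar>x\<bar> \<le> t0 then 1 else K * \<bar>x\<bar> powr (-p))
       \<le> norm (indicator {-t0..t0} x + \<bar>K\<bar> * ?h x + \<bar>K\<bar> * ?h (0 + (-1) * x))"
        using t0 by (cases "x \<ge> 0") (auto simp: indicator_def abs_mult)
    qed
  qed
qed

lemma decay_bound:
  fixes q \<delta> t0 s c :: real
  assumes q: "0 < q" "q < 1" and d: "0 < \<delta>" "\<delta> < q" and t0: "t0 > 0" and s: "\<bar>s\<bar> > t0"
    and H: "\<And>N::nat. q^N * \<bar>s\<bar> \<ge> t0 \<Longrightarrow> c \<le> \<delta>^N"
  shows "c \<le> (t0 powr (ln \<delta> / ln q) / \<delta>) * \<bar>s\<bar> powr (-(ln \<delta> / ln q))"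
proof -
  define x where "x = ln (\<bar>s\<bar>/t0) / (- ln q)"
  have lq: "ln q < 0" using q by simp
  have ld: "ln \<delta> < 0" using d q by simp
  have "ln (\<bar>s\<bar>/t0) > 0" using s t0 by simp
  then have xpos: "x > 0" unfolding x_def using lq by (intro divide_pos_pos) auto
  define N where "N = nat \<lfloor>x\<rfloor>"
  have Nx: "real N \<le> x" "x < real N + 1" unfolding N_def using xpos by linarith+
  have "q^N = exp (real N * ln q)" using q by (simp add: exp_of_nat_mult)
  also have "\<dots> \<ge> exp (x * ln q)" using Nx lq by (intro exp_le_cancel_iff[THEN iffD2] mult_right_mono_neg) auto
  finally have qN: "q^N \<ge> exp (x * ln q)" .
  have "x * ln q = ln (t0 / \<bar>s\<bar>)" unfolding x_def using lq s t0
    by (simp add: ln_div field_simps)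
  then have "exp (x * ln q) = t0 / \<bar>s\<bar>" using s t0 by simp
  with qN have "q^N * \<bar>s\<bar> \<ge> t0" using s t0 by (simp add: field_simps)
  then have c: "c \<le> \<delta>^N" by (rule H)
  have "\<delta>^N = exp (real N * ln \<delta>)" using d by (simp add: exp_of_nat_mult)
  also have "\<dots> \<le> exp ((x - 1) * ln \<delta>)" using Nx ld by (intro exp_le_cancel_iff[THEN iffD2] mult_right_mono_neg) auto
  also have "\<dots> = exp (x * ln \<delta>) / \<delta>" using d by (simp add: left_diff_distrib exp_diff)
  also have "exp (x * ln \<delta>) = exp ((ln t0 - ln \<bar>s\<bar>) * (ln \<delta> / ln q))"
    unfolding x_def using s t0 lq by (simp add: ln_div field_simps)
  also have "\<dots> = t0 powr (ln \<delta> / ln q) * \<bar>s\<bar> powr (-(ln \<delta> / ln q))"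
    using s t0 by (simp add: powr_def exp_add[symmetric] algebra_simps)
  finally show ?thesis using c by (simp add: field_simps)
qed



lemma (in prob_space) as_summable:
  fixes Y :: "nat \<Rightarrow> 'a \<Rightarrow> real" and q a :: real
  assumes Ym[measurable]: "\<And>n. n \<ge> 1 \<Longrightarrow> Y n \<in> borel_measurable M"
    and dist: "\<And>n. n \<ge> 1 \<Longrightarrow> distr M borel (Y n) = distr M borel (Y 1)"
    and a: "a > 0" and int: "integrable M (\<lambda>\<omega>. \<bar>Y 1 \<omega>\<bar> powr a)"
    and q: "0 < q" "q < 1"
  shows "AE \<omega> in M. summable (\<lambda>n. q^(n+1) * \<bar>Y (n+1) \<omega>\<bar>)"
proof -
  define b where "b = min a 1"
  have b: "0 < b" "b \<le> 1" "b \<le> a" using a by (auto simp: b_def)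
  define r where "r = q powr b"
  have r: "0 < r" "r < 1" unfolding r_def using q b powr_less_mono2[of b q 1] by auto
  have Ym1[measurable]: "Y (Suc n) \<in> borel_measurable M" for n using Ym[of "Suc n"] by simp
  have Y1[measurable]: "Y 1 \<in> borel_measurable M" using Ym[of 1] by simp
  define c where "c = (\<integral>\<^sup>+\<omega>. ennreal (\<bar>Y 1 \<omega>\<bar> powr b) \<partial>M)"
  have "c \<le> (\<integral>\<^sup>+\<omega>. ennreal (1 + \<bar>Y 1 \<omega>\<bar> powr a) \<partial>M)"
    unfolding c_def
  proof (intro nn_integral_mono ennreal_leI)
    fix \<omega> show "\<bar>Y 1 \<omega>\<bar> powr b \<le> 1 + \<bar>Y 1 \<omega>\<bar> powr a"
    proof (cases "\<bar>Y 1 \<omega>\<bar> \<le> 1")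
      case True
      then have "\<bar>Y 1 \<omega>\<bar> powr b \<le> 1" using b by (intro powr_le1) auto
      then show ?thesis by (smt (verit) powr_ge_zero)
    next
      case False
      then have "\<bar>Y 1 \<omega>\<bar> powr b \<le> \<bar>Y 1 \<omega>\<bar> powr a" using b by (intro powr_mono) auto
      then show ?thesis by simp
    qed
  qed
  also have "\<dots> = (\<integral>\<^sup>+\<omega>. ennreal 1 \<partial>M) + (\<integral>\<^sup>+\<omega>. ennreal (\<bar>Y 1 \<omega>\<bar> powr a) \<partial>M)"
    by (subst nn_integral_add[symmetric]) (auto intro!: nn_integral_cong simp: ennreal_plus)
  also have "\<dots> < \<infinity>" using integrableD(2)[OF int] by (simp add: emeasure_space_1 less_top)
  finally have cfin: "c < \<infinity>" .
  have cn: "(\<integral>\<^sup>+\<omega>. ennreal (\<bar>Y (Suc n) \<omega>\<bar> powr b) \<partial>M) = c" for n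
  proof -
    have "(\<integral>\<^sup>+\<omega>. ennreal (\<bar>Y (Suc n) \<omega>\<bar> powr b) \<partial>M) = (\<integral>\<^sup>+x. ennreal (\<bar>x\<bar> powr b) \<partial>distr M borel (Y (Suc n)))"
      by (subst nn_integral_distr) auto
    also have "\<dots> = (\<integral>\<^sup>+x. ennreal (\<bar>x\<bar> powr b) \<partial>distr M borel (Y 1))"
      using dist[of "Suc n"] by simp
    also have "\<dots> = c" unfolding c_def by (subst nn_integral_distr) auto
    finally show ?thesis .
  qed
  define u where "u n \<omega> = r^(Suc n) * \<bar>Y (Suc n) \<omega>\<bar> powr b" for n \<omega>
  have u_nonneg: "0 \<le> u n \<omega>" for n \<omega> unfolding u_def using r by simp
  have "(\<integral>\<^sup>+\<omega>. (\<Sum>n. ennreal (u n \<omega>)) \<partial>M) = (\<Sum>n. \<integral>\<^sup>+\<omega>. ennreal (u n \<omega>) \<partial>M)"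
    unfolding u_def by (intro nn_integral_suminf) measurable
  also have "\<dots> = (\<Sum>n. ennreal (r^Suc n) * c)"
    unfolding u_def using r
    by (subst ennreal_mult) (auto simp: nn_integral_cmult cn)
  also have "\<dots> = (\<Sum>n. ennreal (r^Suc n)) * c" by (rule ennreal_suminf_multc)
  also have "\<dots> < \<infinity>"
  proof -
    have "summable (\<lambda>n. r^Suc n)" using r summable_mult[OF summable_geometric[of r], of r] by (simp add: mult.commute)
    then have "(\<Sum>n. ennreal (r^Suc n)) \<noteq> \<top>" using r by (intro ennreal_suminf_neq_top) auto
    with cfin show ?thesis by (simp add: ennreal_mult_less_top less_top)
  qed
  finally have fin: "(\<integral>\<^sup>+\<omega>. (\<Sum>n. ennreal (u n \<omega>)) \<partial>M) \<noteq> \<infinity>" by simp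
  have "AE \<omega> in M. (\<Sum>n. ennreal (u n \<omega>)) \<noteq> \<infinity>"
    by (rule nn_integral_PInf_AE[OF _ fin]) (unfold u_def, measurable)
  then show ?thesis
  proof (rule AE_mp, intro AE_I2 impI)
    fix \<omega> assume "(\<Sum>n. ennreal (u n \<omega>)) \<noteq> \<infinity>"
    then have su: "summable (\<lambda>n. u n \<omega>)" using u_nonneg by (intro summable_suminf_not_top) auto
    define x where "x n = q^(n+1) * \<bar>Y (n+1) \<omega>\<bar>" for n
    have x0: "0 \<le> x n" for n unfolding x_def using q by simp
    have xu: "x n powr b = u n \<omega>" for n
      unfolding x_def u_def r_def using q
      by (simp add: powr_mult powr_realpow[symmetric] powr_powr mult.commute del: power_Suc)
    have "(\<lambda>n. u n \<omega>) \<longlonglongrightarrow> 0" by (rule summable_LIMSEQ_zero[OF su])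
    then have "eventually (\<lambda>n. u n \<omega> < 1) sequentially"
      by (rule order_tendstoD) simp
    then have ev: "eventually (\<lambda>n. norm (x n) \<le> u n \<omega>) sequentially"
    proof (rule eventually_mono)
      fix n assume u1: "u n \<omega> < 1"
      have "x n \<le> 1"
      proof (rule ccontr)
        assume "\<not> x n \<le> 1"
        then have "1 \<le> x n powr b" using b by (intro ge_one_powr_ge_zero) auto
        with u1 xu show False by simp
      qed
      then have "x n powr 1 \<le> x n powr b" using b x0 by (intro powr_mono') auto
      then show "norm (x n) \<le> u n \<omega>" using xu x0 u_nonneg[of n \<omega>] by (cases "x n = 0") auto
    qed
    show "summable (\<lambda>n. q^(n+1) * \<bar>Y (n+1) \<omega>\<bar>)"
      using summable_comparison_test_ev[OF ev su] unfolding x_def .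
  qed
qed



lemma (in prob_space) char_partial:
  fixes Y :: "nat \<Rightarrow> 'a \<Rightarrow> real" and \<rho> s :: real
  assumes ind: "indep_vars (\<lambda>_. borel) Y {1..}"
    and dist: "\<And>n. n \<ge> 1 \<Longrightarrow> distr M borel (Y n) = distr M borel (Y 1)"
  shows "(\<integral>\<omega>. iexp (s * (\<Sum>n<m. \<rho>^(n+1) * Y (n+1) \<omega>)) \<partial>M)
          = (\<Prod>n<m. char (distr M borel (Y 1)) (s * \<rho>^(n+1)))"
proof -
  have Ym[measurable]: "n \<ge> 1 \<Longrightarrow> Y n \<in> borel_measurable M" for n
    using ind unfolding indep_vars_def by auto
  define X where "X n \<omega> = iexp (s * \<rho>^n * Y n \<omega>)" for n \<omega>
  have indX: "indep_vars (\<lambda>_. borel) X {1..m}"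
    unfolding X_def
    by (rule indep_vars_compose2[OF indep_vars_subset[OF ind], where Y="\<lambda>n y. iexp (s * \<rho>^n * y)"]) auto
  have intX: "integrable M (X n)" if "n \<in> {1..m}" for n
    unfolding X_def using that by (intro integrable_iexp) auto
  have "(\<lambda>\<omega>. iexp (s * (\<Sum>n<m. \<rho>^(n+1) * Y (n+1) \<omega>))) = (\<lambda>\<omega>. \<Prod>n\<in>{1..m}. X n \<omega>)"
  proof
    fix \<omega>
    have "iexp (s * (\<Sum>n<m. \<rho>^(n+1) * Y (n+1) \<omega>)) = exp (\<Sum>n<m. \<i> * complex_of_real (s * \<rho>^(n+1) * Y (n+1) \<omega>))"
      by (simp add: sum_distrib_left mult.assoc)
    also have "\<dots> = (\<Prod>n<m. X (Suc n) \<omega>)" by (simp add: exp_sum X_def)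
    also have "\<dots> = (\<Prod>n\<in>{1..m}. X n \<omega>)" by (simp add: prod.atLeast1_atMost_eq)
    finally show "iexp (s * (\<Sum>n<m. \<rho>^(n+1) * Y (n+1) \<omega>)) = (\<Prod>n\<in>{1..m}. X n \<omega>)" .
  qed
  then have "(\<integral>\<omega>. iexp (s * (\<Sum>n<m. \<rho>^(n+1) * Y (n+1) \<omega>)) \<partial>M) = (\<Prod>n\<in>{1..m}. \<integral>\<omega>. X n \<omega> \<partial>M)"
    using indep_vars_lebesgue_integral[OF _ indX intX] by simp
  also have "\<dots> = (\<Prod>n\<in>{1..m}. char (distr M borel (Y 1)) (s * \<rho>^n))"
  proof (intro prod.cong refl)
    fix n assume n: "n \<in> {1..m}"
    have "char (distr M borel (Y 1)) (s * \<rho>^n) = char (distr M borel (Y n)) (s * \<rho>^n)"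
      using dist[of n] n by simp
    also have "\<dots> = (\<integral>\<omega>. X n \<omega> \<partial>M)"
      unfolding char_def X_def using n by (subst integral_distr) auto
    finally show "(\<integral>\<omega>. X n \<omega> \<partial>M) = char (distr M borel (Y 1)) (s * \<rho>^n)" by simp
  qed
  also have "\<dots> = (\<Prod>n<m. char (distr M borel (Y 1)) (s * \<rho>^(n+1)))"
    by (simp add: prod.atLeast1_atMost_eq)
  finally show ?thesis .
qed

lemma (in prob_space) char_limit_bound:
  fixes Y :: "nat \<Rightarrow> 'a \<Rightarrow> real" and \<rho> s \<delta> t0 :: real and Z' :: "'a \<Rightarrow> real"
  assumes ind: "indep_vars (\<lambda>_. borel) Y {1..}"
    and dist: "\<And>n. n \<ge> 1 \<Longrightarrow> distr M borel (Y n) = distr M borel (Y 1)"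
    and Zm[measurable]: "Z' \<in> borel_measurable M"
    and lim: "AE \<omega> in M. (\<lambda>m. \<Sum>n<m. \<rho>^(n+1) * Y (n+1) \<omega>) \<longlonglongrightarrow> Z' \<omega>"
    and rho: "\<bar>\<rho>\<bar> \<le> 1" and d: "0 \<le> \<delta>"
    and phi: "\<And>t. \<bar>t\<bar> \<ge> t0 \<Longrightarrow> cmod (char (distr M borel (Y 1)) t) \<le> \<delta>"
    and N: "\<bar>\<rho>\<bar>^N * \<bar>s\<bar> \<ge> t0"
  shows "cmod (\<integral>\<omega>. iexp (s * Z' \<omega>) \<partial>M) \<le> \<delta>^N"
proof -
  have Ym[measurable]: "n \<ge> 1 \<Longrightarrow> Y n \<in> borel_measurable M" for n
    using ind unfolding indep_vars_def by auto
  have Ym1[measurable]: "Y (Suc n) \<in> borel_measurable M" for n using Ym[of "Suc n"] by simp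
  have Y1[measurable]: "Y 1 \<in> borel_measurable M" using Ym[of 1] by simp
  interpret rd: real_distribution "distr M borel (Y 1)" by auto
  let ?phi = "char (distr M borel (Y 1))"
  have conv: "(\<lambda>m. \<integral>\<omega>. iexp (s * (\<Sum>n<m. \<rho>^(n+1) * Y (n+1) \<omega>)) \<partial>M) \<longlonglongrightarrow> (\<integral>\<omega>. iexp (s * Z' \<omega>) \<partial>M)"
  proof (rule integral_dominated_convergence[where w="\<lambda>_. 1"])
    show "AE x in M. (\<lambda>i. iexp (s * (\<Sum>n<i. \<rho> ^ (n + 1) * Y (n+1) x))) \<longlonglongrightarrow> iexp (s * Z' x)"
      using lim by eventually_elim (rule isCont_tendsto_compose[where g="\<lambda>z. iexp (s*z)"], intro continuous_intros, simp)
  qed (auto simp del: of_real_mult)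
  have bnd: "cmod (\<Prod>n<m. ?phi (s * \<rho>^(n+1))) \<le> \<delta>^N" if "m \<ge> N" for m
    using that
  proof (induction m rule: dec_induct)
    case base
    have "cmod (\<Prod>n<N. ?phi (s * \<rho>^(n+1))) = (\<Prod>n<N. cmod (?phi (s * \<rho>^(n+1))))"
      by (simp add: prod_norm)
    also have "\<dots> \<le> (\<Prod>n<N. \<delta>)"
    proof (intro prod_mono conjI norm_ge_zero phi)
      fix n assume "n \<in> {..<N}"
      then have "\<bar>\<rho>\<bar>^N \<le> \<bar>\<rho>\<bar>^(n+1)" using rho by (intro power_decreasing) auto
      then have "\<bar>\<rho>\<bar>^N * \<bar>s\<bar> \<le> \<bar>\<rho>\<bar>^(n+1) * \<bar>s\<bar>" by (intro mult_right_mono) auto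
      then show "t0 \<le> \<bar>s * \<rho>^(n+1)\<bar>" using N by (simp add: abs_mult power_abs mult.commute)
    qed
    also have "\<dots> = \<delta>^N" by simp
    finally show ?case .
  next
    case (step m)
    have "cmod (\<Prod>n<Suc m. ?phi (s * \<rho>^(n+1))) = cmod (\<Prod>n<m. ?phi (s * \<rho>^(n+1))) * cmod (?phi (s * \<rho>^(m+1)))"
      by (simp add: norm_mult)
    also have "\<dots> \<le> \<delta>^N * 1"
      using step.IH rd.cmod_char_le_1 d by (intro mult_mono) auto
    finally show ?case by simp
  qed
  have "(\<lambda>m. cmod (\<Prod>n<m. ?phi (s * \<rho>^(n+1)))) \<longlonglongrightarrow> cmod (\<integral>\<omega>. iexp (s * Z' \<omega>) \<partial>M)"
    using tendsto_norm[OF conv] by (simp only: char_partial[OF ind dist])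
  then show ?thesis
    by (rule tendsto_upperbound) (use bnd in \<open>auto simp: eventually_sequentially\<close>)
qed

theorem mainTheorem7:
  fixes M :: "'a measure" and Y :: "nat \<Rightarrow> 'a \<Rightarrow> real"
    and \<rho> a \<delta> t\<^sub>0 :: real and Z :: "'a \<Rightarrow> real"
  assumes "prob_space M"
    and "-1 < \<rho>" and "\<rho> < 1" and "\<rho> \<noteq> 0"
    and "prob_space.indep_vars M (\<lambda>_. borel) Y {1..}"
    and "\<And>n. n \<ge> 1 \<Longrightarrow> distr M borel (Y n) = distr M borel (Y 1)"
    and "a > 0" and "integrable M (\<lambda>\<omega>. \<bar>Y 1 \<omega>\<bar> powr a)"
    and "\<And>\<omega>. Z \<omega> = (\<Sum>n. \<rho> ^ (n + 1) * Y (n + 1) \<omega>)"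
    and "0 < \<delta>" and "\<delta> < \<bar>\<rho>\<bar>" and "t\<^sub>0 > 0"
    and "\<And>t. \<bar>t\<bar> \<ge> t\<^sub>0 \<Longrightarrow> cmod (char (distr M borel (Y 1)) t) \<le> \<delta>"
  shows "Limsup (at_right 0)
           (\<lambda>\<epsilon>. ereal (measure M {\<omega> \<in> space M. \<bar>Z \<omega>\<bar> \<le> \<epsilon>} / \<epsilon>)) < \<infinity>"
proof -
  note asm = assms
  interpret prob_space M by (rule asm(1))
  define q where "q = \<bar>\<rho>\<bar>"
  have q: "0 < q" "q < 1" unfolding q_def using asm(2-4) by auto
  have d: "0 < \<delta>" "\<delta> < q" using asm(10,11) unfolding q_def by auto
  have t0: "t\<^sub>0 > 0" by (rule asm(12))
  have ind: "indep_vars (\<lambda>_. borel) Y {1..}" by (rule asm(5))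
  have Ym[measurable]: "n \<ge> 1 \<Longrightarrow> Y n \<in> borel_measurable M" for n
    using ind unfolding indep_vars_def by auto
  have Ym1[measurable]: "Y (Suc n) \<in> borel_measurable M" for n using Ym[of "Suc n"] by simp
  have Ym2[measurable]: "Y (n+1) \<in> borel_measurable M" for n using Ym[of "n+1"] by simp
  have AEs: "AE \<omega> in M. summable (\<lambda>n. q^(n+1) * \<bar>Y (n+1) \<omega>\<bar>)"
    by (rule as_summable[of Y, OF Ym asm(6) asm(7) asm(8) q]) auto
  define S where "S m \<omega> = (\<Sum>n<m. \<rho>^(n+1) * Y (n+1) \<omega>)" for m \<omega>
  define Z' where "Z' \<omega> = lim (\<lambda>m. S m \<omega>)" for \<omega>
  have Sm[measurable]: "S m \<in> borel_measurable M" for m unfolding S_def by measurable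
  have Zm[measurable]: "Z' \<in> borel_measurable M" unfolding Z'_def by measurable
  have AEZ: "AE \<omega> in M. (\<lambda>m. S m \<omega>) \<longlonglongrightarrow> Z' \<omega> \<and> Z \<omega> = Z' \<omega>"
    using AEs
  proof eventually_elim
    case (elim \<omega>)
    have "summable (\<lambda>n. norm (\<rho>^(n+1) * Y (n+1) \<omega>))"
      using elim by (simp add: q_def abs_mult power_abs)
    then have su: "summable (\<lambda>n. \<rho>^(n+1) * Y (n+1) \<omega>)" by (rule summable_norm_cancel)
    have L: "(\<lambda>m. S m \<omega>) \<longlonglongrightarrow> Z \<omega>" unfolding S_def asm(9) by (rule summable_LIMSEQ[OF su])
    then have "Z' \<omega> = Z \<omega>" unfolding Z'_def by (rule limI)
    with L show ?case by simp
  qed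
  have lim: "AE \<omega> in M. (\<lambda>m. \<Sum>n<m. \<rho>^(n+1) * Y (n+1) \<omega>) \<longlonglongrightarrow> Z' \<omega>"
    using AEZ by eventually_elim (simp add: S_def)
  define \<psi> where "\<psi> s = (\<integral>\<omega>. iexp (s * Z' \<omega>) \<partial>M)" for s
  have psiN: "cmod (\<psi> s) \<le> \<delta>^N" if "q^N * \<bar>s\<bar> \<ge> t\<^sub>0" for s N
    unfolding \<psi>_def
    by (rule char_limit_bound[OF ind asm(6) Zm lim _ _ asm(13)]) (use that d q in \<open>auto simp: q_def\<close>)
  have psi1: "cmod (\<psi> s) \<le> 1" for s
  proof -
    have "cmod (\<psi> s) \<le> (\<integral>\<omega>. norm (iexp (s * Z' \<omega>)) \<partial>M)"
      unfolding \<psi>_def by (rule integral_norm_bound)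
    also have "\<dots> = 1" by (simp add: prob_space del: of_real_mult)
    finally show ?thesis .
  qed
  define p where "p = ln \<delta> / ln q"
  define K where "K = t\<^sub>0 powr p / \<delta>"
  have lq: "ln q < 0" using q by simp
  have "ln \<delta> < ln q" using d by simp
  then have p1: "p > 1" unfolding p_def using lq by (simp add: less_divide_eq)
  define B where "B s = (if \<bar>s\<bar> \<le> t\<^sub>0 then 1 else K * \<bar>s\<bar> powr (-p))" for s
  have psiB: "cmod (\<psi> s) \<le> B s" for s
  proof (cases "\<bar>s\<bar> \<le> t\<^sub>0")
    case True then show ?thesis using psi1 by (simp add: B_def)
  next
    case False
    then have "cmod (\<psi> s) \<le> (t\<^sub>0 powr (ln \<delta> / ln q) / \<delta>) * \<bar>s\<bar> powr (-(ln \<delta> / ln q))"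
      by (intro decay_bound[OF q d t0] psiN) auto
    then show ?thesis using False by (simp add: B_def K_def p_def)
  qed
  have Bint: "integrable lborel B" unfolding B_def by (rule integrable_B[OF t0 p1])
  have Bm[measurable]: "B \<in> borel_measurable borel" using borel_measurable_integrable[OF Bint] by simp
  define IB where "IB = (\<integral>s. B s \<partial>lborel)"
  define C where "C = exp (1/2) * IB"
  have Nle1: "std_normal_density t \<le> 1" for t
  proof -
    have "sqrt (2*pi) \<ge> 1" using pi_gt3 by simp
    then have h1: "1 / sqrt (2 * pi) \<le> 1" by simp
    have h2: "exp (- t\<^sup>2 / 2) \<le> 1" by simp
    have "(1 / sqrt (2 * pi)) * exp (- t\<^sup>2 / 2) \<le> 1 * 1"
      by (rule mult_mono[OF h1 h2]) auto
    then show ?thesis unfolding std_normal_density_def by simp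
  qed
  have psi_char: "\<psi> = char (distr M borel Z')"
    by (rule ext) (simp add: \<psi>_def char_def integral_distr)
  have psim[measurable]: "\<psi> \<in> borel_measurable borel"
    unfolding psi_char by (rule real_distribution.char_measurable) auto
  have main': "measure M {\<omega> \<in> space M. \<bar>Z' \<omega>\<bar> \<le> \<epsilon>} \<le> C * \<epsilon>" if e: "\<epsilon> > 0" for \<epsilon>
  proof -
    define T where "T = 1 / \<epsilon>"
    have T: "T > 0" unfolding T_def using e by simp
    let ?A = "{\<omega> \<in> space M. \<bar>Z' \<omega>\<bar> \<le> \<epsilon>}"
    have Am: "?A \<in> sets M" by measurable
    have "exp (-1/2::real) * measure M ?A = (\<integral>\<omega>. exp (-1/2::real) * indicator ?A \<omega> \<partial>M)"
      using Am by simp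
    also have "\<dots> \<le> (\<integral>\<omega>. exp (-((T * Z' \<omega>)^2)/2) \<partial>M)"
    proof (rule integral_mono)
      show "integrable M (\<lambda>\<omega>. exp (-1/2::real) * indicator ?A \<omega>)"
        using Am by (intro integrable_mult_right integrable_real_indicator) (auto simp: emeasure_eq_measure)
      show "integrable M (\<lambda>\<omega>. exp (-((T * Z' \<omega>)^2)/2))"
        by (rule integrable_const_bound[where B=1]) auto
      fix \<omega> assume "\<omega> \<in> space M"
      show "exp (-1/2::real) * indicator ?A \<omega> \<le> exp (-((T * Z' \<omega>)^2)/2)"
      proof (cases "\<omega> \<in> ?A")
        case True
        then have "\<bar>T * Z' \<omega>\<bar> \<le> 1" using e by (auto simp: T_def abs_mult field_simps)
        then have "\<bar>T * Z' \<omega>\<bar>^2 \<le> 1" by (intro power_le_one) auto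
        then have "(T * Z' \<omega>)^2 \<le> 1" by simp
        then show ?thesis using True by (simp add: indicator_def)
      next
        case False
        then show ?thesis by simp
      qed
    qed
    also have "\<dots> \<le> (\<integral>t. std_normal_density t * cmod (\<integral>\<omega>. iexp (T*t * Z' \<omega>) \<partial>M) \<partial>lborel)"
      by (rule gauss_bound[OF Zm])
    also have "\<dots> = (\<integral>t. std_normal_density t * cmod (\<psi> (T*t)) \<partial>lborel)"
      unfolding \<psi>_def ..
    also have "\<dots> \<le> (\<integral>t. B (0 + T * t) \<partial>lborel)"
    proof (rule integral_mono)
      show "integrable lborel (\<lambda>t. B (0 + T * t))"
        by (rule lborel_integrable_real_affine[OF Bint]) (use T in auto)
      show "integrable lborel (\<lambda>t. std_normal_density t * cmod (\<psi> (T*t)))"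
      proof (rule Bochner_Integration.integrable_bound[OF integrable_normal_density[of 1 0]])
        show "(\<lambda>t. std_normal_density t * cmod (\<psi> (T*t))) \<in> borel_measurable lborel"
          by measurable
        show "AE x in lborel. norm (std_normal_density x * cmod (\<psi> (T*x))) \<le> norm (std_normal_density x)"
          using psi1 by (auto intro!: mult_left_le simp: abs_mult)
      qed simp
      fix t :: real
      have "std_normal_density t * cmod (\<psi> (T*t)) \<le> 1 * B (T*t)"
        using psiB[of "T*t"] Nle1[of t] by (intro mult_mono) auto
      then show "std_normal_density t * cmod (\<psi> (T*t)) \<le> B (0 + T * t)"
        by simp
    qed
    also have "\<dots> = \<epsilon> * IB"
    proof -
      have "IB = T * (\<integral>t. B (0 + T * t) \<partial>lborel)"
        using lborel_integral_real_affine[of T B 0] T unfolding IB_def by simp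
      then have "\<epsilon> * IB = (\<epsilon> * T) * (\<integral>t. B (0 + T * t) \<partial>lborel)" by simp
      also have "\<epsilon> * T = 1" unfolding T_def using e by simp
      finally show ?thesis by simp
    qed
    finally have "exp (-1/2::real) * measure M ?A \<le> \<epsilon> * IB" .
    then have "exp (1/2) * (exp (-1/2::real) * measure M ?A) \<le> exp (1/2) * (\<epsilon> * IB)"
      by (rule mult_left_mono) simp
    moreover have "exp (1/2) * (exp (-1/2::real) * measure M ?A) = measure M ?A"
    proof -
      have e1: "exp (1/2) * exp (-1/2::real) = 1" by (simp add: exp_minus)
      show ?thesis by (simp only: mult.assoc[symmetric] e1 mult_1)
    qed
    ultimately have "measure M ?A \<le> exp (1/2) * (\<epsilon> * IB)" by linarith
    then show ?thesis unfolding C_def by (simp add: mult_ac)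
  qed
  obtain N where N: "{\<omega> \<in> space M. \<not> ((\<lambda>m. S m \<omega>) \<longlonglongrightarrow> Z' \<omega> \<and> Z \<omega> = Z' \<omega>)} \<subseteq> N"
    "emeasure M N = 0" "N \<in> sets M"
    using AEZ by (rule AE_E)
  have main: "measure M {\<omega> \<in> space M. \<bar>Z \<omega>\<bar> \<le> \<epsilon>} / \<epsilon> \<le> C" if e: "\<epsilon> > 0" for \<epsilon>
  proof -
    let ?A = "{\<omega> \<in> space M. \<bar>Z' \<omega>\<bar> \<le> \<epsilon>}"
    have Am: "?A \<in> sets M" by measurable
    have "measure M {\<omega> \<in> space M. \<bar>Z \<omega>\<bar> \<le> \<epsilon>} \<le> measure M (?A \<union> N)"
      using N Am by (intro finite_measure_mono) auto
    also have "\<dots> \<le> measure M ?A + measure M N"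
      using Am N by (intro measure_Un_le) auto
    also have "measure M N = 0" using N by (simp add: measure_def)
    finally have "measure M {\<omega> \<in> space M. \<bar>Z \<omega>\<bar> \<le> \<epsilon>} \<le> C * \<epsilon>" using main'[OF e] by simp
    then show ?thesis using e by (simp add: divide_le_eq)
  qed
  have "Limsup (at_right 0) (\<lambda>\<epsilon>. ereal (measure M {\<omega> \<in> space M. \<bar>Z \<omega>\<bar> \<le> \<epsilon>} / \<epsilon>)) \<le> ereal C"
  proof (rule Limsup_bounded)
    show "\<forall>\<^sub>F \<epsilon> in at_right 0. ereal (measure M {\<omega> \<in> space M. \<bar>Z \<omega>\<bar> \<le> \<epsilon>} / \<epsilon>) \<le> ereal C"
      by (rule eventually_mono[OF eventually_at_right_less[of "0::real"]]) (use main in simp)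
  qed
  moreover have "ereal C < \<infinity>" by simp
  ultimately show ?thesis by (rule le_less_trans)
qed
end
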